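(* Let $A\in M_n(R)$ be non-singular, with left definite form $\bar A$ and right definite form $\tilde A$, i.e. $A=P\bar A=\tilde A Q$ for invertible matrices $P,Q$ and definite matrices $\bar A,\tilde A$. Then (a) $\bar A^{\nabla\nabla}\cong_\nu \bar A^{\nabla}\cong_\nu A^\nabla A$ and $\tilde A^{\nabla\nabla}\cong_\nu \tilde A^{\nabla}\cong_\nu AA^\nabla$; (b) $A^{\nabla\nabla}\cong_\nu PA^\nabla P$.
   Context: Supertropical semiring $R=T\cup G\cup\{-\infty\}$: $T=\mathcal G$ an ordered abelian group (tangible), $G=\{a^\nu\}$ a copy (ghost); $a+b$ is the element of larger $\nu$-value if the $\nu$-values differ and $a^\nu$ if equal; multiplication adds $\nu$-values, is ghost if a factor is ghost, $-\infty$ absorbing; $0_R=-\infty$, $1_R=0$. For matrices, $A\cong_\nu B$ means $a_{i,j}^\nu=b_{i,j}^\nu$ for all $i,j$. $\det(A)=\sum_{\sigma\in S_n}\prod_i a_{i,\sigma(i)}$; $A$ non-singular means $\det(A)\in T$. $\operatorname{adj}(A)_{i,j}=\det(A_{j,i})$ (minor deleting row $j$, column $i$), and for non-singular $A$, $A^\nabla=\det(A)^{-1}\operatorname{adj}(A)$; $A^{\nabla\nabla}=(A^\nabla)^\nabla$. A matrix is invertible iff it is a generalized permutation matrix (permutation matrix times diagonal matrix with tangible diagonal). A matrix is definite if its diagonal entries are $1_R$ and its determinant is $1_R$. Every non-singular $A$ can be written $A=P\bar A$ ($P$ invertible, $\bar A$ definite; left definite form) and $A=\tilde A Q$ ($Q$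 invertible, $\tilde A$ definite; right definite form), obtained by moving the unique dominant permutation track to the diagonal and normalizing it to $1_R$. *)

theory Defs
  imports "HOL-Combinatorics.Permutations"
begin

text \<open>Tangible elements Tng a, ghost elements Gst a (= a^nu), and the zero element NInf (= -infinity).\<close>
datatype 'g st = Tng 'g | Gst 'g | NInf

fun st_val :: "'g st \<Rightarrow> 'g" where
  "st_val (Tng a) = a" | "st_val (Gst a) = a" | "st_val NInf = undefined"

fun nu :: "'g st \<Rightarrow> 'g st" where
  "nu (Tng a) = Gst a" | "nu (Gst a) = Gst a" | "nu NInf = NInf"

fun tangible :: "'g st \<Rightarrow> bool" where
  "tangible (Tng a) = True" | "tangible _ = False"

instantiation st :: (linordered_ab_group_add) comm_monoid_add
begin
definition zero_st :: "'a st" where "zero_st = NInf"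
fun plus_st :: "'a st \<Rightarrow> 'a st \<Rightarrow> 'a st" where
  "plus_st NInf y = y"
| "plus_st x NInf = x"
| "plus_st x y = (if st_val x < st_val y then y else if st_val y < st_val x then x
                  else Gst (st_val x))"
instance
proof
  fix a b c :: "'a st"
  show "a + b + c = a + (b + c)"
    by (cases a; cases b; cases c) auto
  show "a + b = b + a"
    by (cases a; cases b) auto
  show "0 + a = a" by (simp add: zero_st_def)
qed
end

instantiation st :: (linordered_ab_group_add) comm_monoid_mult
begin
definition one_st :: "'a st" where "one_st = Tng 0"
fun times_st :: "'a st \<Rightarrow> 'a st \<Rightarrow> 'a st" where
  "times_st NInf y = NInf"
| "times_st x NInf = NInf"
| "times_st (Tng a) (Tng b) = Tng (a + b)"
| "times_st x y = Gst (st_val x + st_val y)"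
instance
proof
  fix a b c :: "'a st"
  show "a * b * c = a * (b * c)"
    by (cases a; cases b; cases c) (auto simp: add.assoc)
  show "a * b = b * a"
    by (cases a; cases b) (auto simp: add.commute)
  show "1 * a = a" by (cases a) (simp_all add: one_st_def)
qed
end

text \<open>Inverse of a tangible element (used only for tangible determinants; on ghosts
  we take the nu-inverse, on NInf it is NInf).\<close>
fun st_inv :: "'g::linordered_ab_group_add st \<Rightarrow> 'g st" where
  "st_inv (Tng a) = Tng (- a)" | "st_inv (Gst a) = Gst (- a)" | "st_inv NInf = NInf"

section \<open>n x n matrices, represented as functions on indices below n\<close>

type_synonym 'g smat = "nat \<Rightarrow> nat \<Rightarrow> 'g st"

definition mat_eq :: "nat \<Rightarrow> 'g smat \<Rightarrow> 'g smat \<Rightarrow> bool" where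
  "mat_eq n A B \<longleftrightarrow> (\<forall>i<n. \<forall>j<n. A i j = B i j)"

definition nu_equiv :: "nat \<Rightarrow> 'g smat \<Rightarrow> 'g smat \<Rightarrow> bool" where
  "nu_equiv n A B \<longleftrightarrow> (\<forall>i<n. \<forall>j<n. nu (A i j) = nu (B i j))"

definition mat_mult :: "nat \<Rightarrow> 'g::linordered_ab_group_add smat \<Rightarrow> 'g smat \<Rightarrow> 'g smat" where
  "mat_mult n A B = (\<lambda>i j. \<Sum>k<n. A i k * B k j)"

definition mat_id :: "'g::linordered_ab_group_add smat" where
  "mat_id = (\<lambda>i j. if i = j then 1 else 0)"

definition sdet :: "nat \<Rightarrow> 'g::linordered_ab_group_add smat \<Rightarrow> 'g st" where
  "sdet n A = (\<Sum>\<sigma>\<in>{\<sigma>. \<sigma> permutes {..<n}}. \<Prod>i<n. A i (\<sigma> i))"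

definition nonsingular :: "nat \<Rightarrow> 'g::linordered_ab_group_add smat \<Rightarrow> bool" where
  "nonsingular n A \<longleftrightarrow> tangible (sdet n A)"

definition minor :: "'g smat \<Rightarrow> nat \<Rightarrow> nat \<Rightarrow> 'g smat" where
  "minor A r c = (\<lambda>i j. A (if i < r then i else Suc i) (if j < c then j else Suc j))"

definition sadj :: "nat \<Rightarrow> 'g::linordered_ab_group_add smat \<Rightarrow> 'g smat" where
  "sadj n A = (\<lambda>i j. sdet (n - 1) (minor A j i))"

definition nabla :: "nat \<Rightarrow> 'g::linordered_ab_group_add smat \<Rightarrow> 'g smat" where
  "nabla n A = (\<lambda>i j. st_inv (sdet n A) * sadj n A i j)"

definition invertible_smat :: "nat \<Rightarrow> 'g::linordered_ab_group_add smat \<Rightarrow> bool" where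
  "invertible_smat n P \<longleftrightarrow>
     (\<exists>B. mat_eq n (mat_mult n P B) mat_id \<and> mat_eq n (mat_mult n B P) mat_id)"

definition definite :: "nat \<Rightarrow> 'g::linordered_ab_group_add smat \<Rightarrow> bool" where
  "definite n A \<longleftrightarrow> (\<forall>i<n. A i i = 1) \<and> sdet n A = 1"

end

theory Submission
  imports Defs
begin


instance st :: (linordered_ab_group_add) comm_semiring_1
proof
  fix a b c :: "'a st"
  show "(a + b) * c = a * c + b * c"
    by (cases a; cases b; cases c) (auto simp: not_less)
  show "0 * a = 0" by (simp add: zero_st_def)
  show "a * 0 = 0" by (cases a) (simp_all add: zero_st_def)
  show "(0::'a st) \<noteq> 1" by (simp add: zero_st_def one_st_def)
qed



definition nle :: "'g::linordered_ab_group_add st \<Rightarrow> 'g st \<Rightarrow> bool" where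
  "nle x y \<longleftrightarrow> x = NInf \<or> (y \<noteq> NInf \<and> st_val x \<le> st_val y)"

lemma nle_refl[simp]: "nle x x" by (cases x) (auto simp: nle_def)
lemma nle_trans: "nle x y \<Longrightarrow> nle y z \<Longrightarrow> nle x z"
  by (cases x; cases y; cases z) (auto simp: nle_def)
lemma nle_total: "nle x y \<or> nle y x"
  by (cases x; cases y) (auto simp: nle_def)
lemma nle_zero[simp]: "nle 0 x" by (simp add: nle_def zero_st_def)
lemma nle_add_left: "nle x (x + y)"
  by (cases x; cases y) (auto simp: nle_def)
lemma nle_add_right: "nle y (x + y)"
  by (cases x; cases y) (auto simp: nle_def)
lemma nle_add: "nle x z \<Longrightarrow> nle y z \<Longrightarrow> nle (x + y) z"
  by (cases x; cases y; cases z) (auto simp: nle_def)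
lemma nle_mult: "nle a b \<Longrightarrow> nle c d \<Longrightarrow> nle (a * c) (b * d)"
  by (cases a; cases b; cases c; cases d) (auto simp: nle_def add_mono)
lemma nu_eqI: "nle x y \<Longrightarrow> nle y x \<Longrightarrow> nu x = nu y"
  by (cases x; cases y) (auto simp: nle_def)
lemma nle_nu: "nle x y \<longleftrightarrow> nle (nu x) (nu y)"
  by (cases x; cases y) (auto simp: nle_def)
lemma nu_nle: "nu x = nu y \<Longrightarrow> nle x y"
  by (metis nle_nu nle_refl)
lemma nu_mult: "nu (x * y) = nu x * nu y"
  by (cases x; cases y) auto
lemma nu_st_inv: "nu x = nu y \<Longrightarrow> nu (st_inv x) = nu (st_inv y)"
  by (cases x; cases y) auto

lemma nle_sum_upper: "finite A \<Longrightarrow> (\<And>x. x \<in> A \<Longrightarrow> nle (f x) y) \<Longrightarrow> nle (sum f A) y"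
  by (induction A rule: finite_induct) (auto simp: nle_add)
lemma nle_sum_member: "finite A \<Longrightarrow> a \<in> A \<Longrightarrow> nle (f a) (sum f A)"
  by (metis nle_add_left sum.remove)
lemma nle_prod: "(\<And>x. x \<in> A \<Longrightarrow> nle (f x) (g x)) \<Longrightarrow> nle (prod f A) (prod g A)"
  by (induction A rule: infinite_finite_induct) (auto simp: nle_mult)

lemma st_inv_mult: "st_inv (x * y) = st_inv x * st_inv y"
  by (cases x; cases y) auto
lemma st_inv_tng: "tangible x \<Longrightarrow> st_inv x * x = 1"
  by (cases x) (auto simp: one_st_def)
lemma st_inv_inv: "st_inv (st_inv x) = x" by (cases x) auto
lemma tangible_mult: "tangible (x * y) \<longleftrightarrow> tangible x \<and> tangible y"
  by (cases x; cases y) auto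
lemma tangible_st_inv: "tangible (st_inv x) = tangible x" by (cases x) auto
lemma tangible_prod: "(\<And>x. x \<in> A \<Longrightarrow> tangible (f x)) \<Longrightarrow> tangible (prod f A)"
  by (induction A rule: infinite_finite_induct) (auto simp: tangible_mult one_st_def)
lemma st_inv_one[simp]: "st_inv 1 = 1" by (simp add: one_st_def)

lemma sum_eq_zero_iff: "finite A \<Longrightarrow> sum f A = 0 \<longleftrightarrow> (\<forall>x\<in>A. f x = (0::'g::linordered_ab_group_add st))"
proof (induction A rule: finite_induct)
  case (insert x F)
  have "\<And>a b::'g st. a + b = 0 \<longleftrightarrow> a = 0 \<and> b = 0"
    by (case_tac a; case_tac b) (auto simp: zero_st_def)
  then show ?case using insert by simp
qed simp
lemma mult_eq_zero_iff_st: "(a::'g::linordered_ab_group_add st) * b = 0 \<longleftrightarrow> a = 0 \<or> b = 0"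
  by (cases a; cases b) (auto simp: zero_st_def)

lemma sum_single: "finite A \<Longrightarrow> a \<in> A \<Longrightarrow> (\<And>x. x \<in> A \<Longrightarrow> x \<noteq> a \<Longrightarrow> f x = 0) \<Longrightarrow> sum f A = f a"
  by (simp add: sum.remove)



definition sh :: "nat \<Rightarrow> nat \<Rightarrow> nat" where "sh r a = (if a < r then a else Suc a)"
definition ush :: "nat \<Rightarrow> nat \<Rightarrow> nat" where "ush r l = (if l < r then l else l - 1)"

lemma ush_sh[simp]: "ush r (sh r a) = a" by (simp add: sh_def ush_def)
lemma sh_ush[simp]: "l \<noteq> r \<Longrightarrow> sh r (ush r l) = l" by (auto simp add: sh_def ush_def)
lemma sh_neq[simp]: "sh r a \<noteq> r" by (simp add: sh_def)
lemma sh_less: "a < n - 1 \<Longrightarrow> sh r a < n" by (auto simp add: sh_def)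
lemma ush_less: "l < n \<Longrightarrow> l \<noteq> r \<Longrightarrow> r < n \<Longrightarrow> ush r l < n - 1" by (auto simp add: ush_def)
lemma sh_inj: "sh r a = sh r b \<longleftrightarrow> a = b" by (auto simp add: sh_def)

definition padj :: "nat \<Rightarrow> 'g::linordered_ab_group_add smat \<Rightarrow> nat \<Rightarrow> nat \<Rightarrow> 'g st" where
  "padj n M i j = (\<Sum>\<sigma>\<in>{\<sigma>. \<sigma> permutes {..<n} \<and> \<sigma> j = i}. \<Prod>l\<in>{..<n}-{j}. M l (\<sigma> l))"

lemma sadj_padj:
  assumes i: "i < n" and j: "j < n"
  shows "sadj n M i j = padj n M i j"
proof -
  define \<phi> where "\<phi> \<tau> = (\<lambda>l. if l = j then i else if l < n then sh i (\<tau> (ush j l)) else l)" for \<tau> :: "nat \<Rightarrow> nat"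
  define \<psi> where "\<psi> \<sigma> = (\<lambda>a. if a < n - 1 then ush i (\<sigma> (sh j a)) else a)" for \<sigma> :: "nat \<Rightarrow> nat"
  have phi_perm: "\<phi> \<tau> permutes {..<n} \<and> \<phi> \<tau> j = i" if t: "\<tau> permutes {..<n-1}" for \<tau>
  proof -
    have tin: "\<tau> a < n - 1" if a: "a < n - 1" for a using permutes_in_image[OF t, of a] a by simp
    have tinj: "\<tau> a = \<tau> b \<Longrightarrow> a = b" for a b using permutes_inj[OF t] by (auto dest: injD)
    have "inj_on (\<phi> \<tau>) {..<n}"
    proof (rule inj_onI)
      fix x y assume x: "x \<in> {..<n}" and y: "y \<in> {..<n}" and e: "\<phi> \<tau> x = \<phi> \<tau> y"
      show "x = y"
      proof (cases "x = j"; cases "y = j")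
        assume "x \<noteq> j" "y \<noteq> j"
        then have "sh i (\<tau> (ush j x)) = sh i (\<tau> (ush j y))" using e x y by (simp add: \<phi>_def)
        then have "ush j x = ush j y" using tinj sh_inj by metis
        then show ?thesis using \<open>x \<noteq> j\<close> \<open>y \<noteq> j\<close> by (metis sh_ush)
      qed (use e x y in \<open>auto simp: \<phi>_def dest: sym\<close>)
    qed
    moreover have "\<phi> \<tau> x \<in> {..<n}" if "x \<in> {..<n}" for x
      using that i j tin[OF ush_less[of x n j]] sh_less by (auto simp: \<phi>_def)
    ultimately show ?thesis
      using j by (intro conjI inj_imp_permutes) (auto simp: \<phi>_def)
  qed
  have psi_perm: "\<psi> \<sigma> permutes {..<n-1}" if s: "\<sigma> permutes {..<n}" "\<sigma> j = i" for \<sigma>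
  proof -
    have sin: "\<sigma> a < n" if a: "a < n" for a using permutes_in_image[OF s(1), of a] a by simp
    have sinj: "\<sigma> a = \<sigma> b \<Longrightarrow> a = b" for a b using permutes_inj[OF s(1)] by (auto dest: injD)
    have sne: "\<sigma> (sh j a) \<noteq> i" for a using sinj s(2) sh_neq by metis
    have "inj_on (\<psi> \<sigma>) {..<n-1}"
    proof (rule inj_onI)
      fix x y assume x: "x \<in> {..<n-1}" and y: "y \<in> {..<n-1}" and e: "\<psi> \<sigma> x = \<psi> \<sigma> y"
      then have "ush i (\<sigma> (sh j x)) = ush i (\<sigma> (sh j y))" by (simp add: \<psi>_def)
      then have "\<sigma> (sh j x) = \<sigma> (sh j y)" using sne by (metis sh_ush)
      then show "x = y" using sinj sh_inj by metis
    qed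
    moreover have "\<psi> \<sigma> x \<in> {..<n-1}" if "x \<in> {..<n-1}" for x
      using that i sin[OF sh_less] sne ush_less by (auto simp: \<psi>_def)
    ultimately show ?thesis
      by (intro inj_imp_permutes) (auto simp: \<psi>_def)
  qed
  have "sadj n M i j = (\<Sum>\<tau>\<in>{\<tau>. \<tau> permutes {..<n-1}}. \<Prod>a<n-1. M (sh j a) (sh i (\<tau> a)))"
    by (simp add: sadj_def sdet_def minor_def sh_def)
  also have "\<dots> = padj n M i j"
    unfolding padj_def
  proof (rule sum.reindex_bij_witness[where i = \<psi> and j = \<phi>])
    fix \<tau> assume "\<tau> \<in> {\<tau>. \<tau> permutes {..<n-1}}"
    then have t: "\<tau> permutes {..<n-1}" by simp
    show "\<phi> \<tau> \<in> {\<sigma>. \<sigma> permutes {..<n} \<and> \<sigma> j = i}" using phi_perm[OF t] by simp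
    show "\<psi> (\<phi> \<tau>) = \<tau>"
    proof
      fix a show "\<psi> (\<phi> \<tau>) a = \<tau> a"
        using sh_less[of a n j] permutes_not_in[OF t, of a]
        by (auto simp: \<psi>_def \<phi>_def)
    qed
    show "(\<Prod>l\<in>{..<n}-{j}. M l (\<phi> \<tau> l)) = (\<Prod>a<n-1. M (sh j a) (sh i (\<tau> a)))"
    proof (rule sym, rule prod.reindex_bij_witness[where i = "ush j" and j = "sh j"])
      fix a assume "a \<in> {..<n-1}"
      then show "ush j (sh j a) = a" "sh j a \<in> {..<n}-{j}"
        "M (sh j a) (\<phi> \<tau> (sh j a)) = M (sh j a) (sh i (\<tau> a))"
        using sh_less[of a n j] by (auto simp: \<phi>_def)
    next
      fix l assume "l \<in> {..<n}-{j}"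
      then show "sh j (ush j l) = l" "ush j l \<in> {..<n-1}" using ush_less j by auto
    qed
  next
    fix \<sigma> assume "\<sigma> \<in> {\<sigma>. \<sigma> permutes {..<n} \<and> \<sigma> j = i}"
    then have s: "\<sigma> permutes {..<n}" "\<sigma> j = i" by auto
    have sinj: "\<sigma> a = \<sigma> b \<Longrightarrow> a = b" for a b using permutes_inj[OF s(1)] by (auto dest: injD)
    show "\<psi> \<sigma> \<in> {\<tau>. \<tau> permutes {..<n-1}}" using psi_perm[OF s] by simp
    show "\<phi> (\<psi> \<sigma>) = \<sigma>"
    proof
      fix l show "\<phi> (\<psi> \<sigma>) l = \<sigma> l"
      proof (cases "l = j")
        case False
        show ?thesis
        proof (cases "l < n")
          case True
          have "\<sigma> l \<noteq> i" using False s(2) sinj by metis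
          then show ?thesis using True False ush_less[OF True False j] by (simp add: \<phi>_def \<psi>_def)
        qed (use False permutes_not_in[OF s(1), of l] in \<open>auto simp: \<phi>_def\<close>)
      qed (use s in \<open>simp add: \<phi>_def\<close>)
    qed
  qed
  finally show ?thesis .
qed



lemma exchange:
  fixes D :: "'g::linordered_ab_group_add smat"
  assumes diag: "\<And>l. l < n \<Longrightarrow> D l l = 1"
    and perms: "\<And>\<rho>. \<rho> permutes {..<n} \<Longrightarrow> nle (\<Prod>l<n. D l (\<rho> l)) 1"
    and s: "\<sigma> permutes {..<n}" and sk: "\<sigma> k = i" and ij: "i \<noteq> j"
    and i: "i < n" and j: "j < n" and k: "k < n"
  shows "\<exists>\<tau>. \<tau> permutes {..<n} \<and> \<tau> j = i \<and>
           nle ((\<Prod>l\<in>{..<n}-{k}. D l (\<sigma> l)) * D k j) (\<Prod>l\<in>{..<n}-{j}. D l (\<tau> l))"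
proof -
  define S where "S = {..<n}"
  define g where "g = \<sigma>(k := j)"
  have fS: "finite S" by (simp add: S_def)
  have sin: "\<sigma> x \<in> S" if "x \<in> S" for x using permutes_in_image[OF s] that by (simp add: S_def)
  have sinj: "\<sigma> a = \<sigma> b \<Longrightarrow> a = b" for a b using permutes_inj[OF s] by (auto dest: injD)
  have gS: "g x \<in> S" if "x \<in> S" for x using sin[OF that] j by (simp add: g_def S_def)
  have gout: "g x = x" if "x \<notin> S" for x
    using that k permutes_not_in[OF s, of x] by (auto simp: g_def S_def)
  have two_pre: "g x = j" if "g x = g y" "x \<noteq> y" for x y
    using that by (auto simp: g_def split: if_splits dest: sinj)
  have three: False if "g x = g y" "g y = g z" "x \<noteq> y" "y \<noteq> z" "x \<noteq> z" for x y z
    using that by (auto simp: g_def split: if_splits dest: sinj)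
  have no_i: "g x \<noteq> i" for x
    using sk ij by (auto simp: g_def dest: sinj)
  define f where "f m = (g ^^ m) j" for m
  have fS': "f m \<in> S" for m
  proof (induction m)
    case 0 then show ?case using j by (simp add: f_def S_def)
  next
    case (Suc m) then show ?case using gS by (simp add: f_def)
  qed
  have "\<not> inj_on f {..n}"
  proof (rule pigeonhole)
    have "f ` {..n} \<subseteq> S" using fS' by auto
    then have "card (f ` {..n}) \<le> card S" by (simp add: card_mono fS)
    then show "card (f ` {..n}) < card {..n}" by (simp add: S_def)
  qed
  then obtain a b where ab: "a \<noteq> b" "f a = f b" by (auto simp: inj_on_def)
  define P where "P a \<longleftrightarrow> (\<exists>b>a. f a = f b)" for a
  have "P a \<or> P b"
  proof (cases "a < b")
    case True then show ?thesis using ab by (auto simp: P_def)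
  next
    case False then have "b < a" using ab(1) by simp
    then show ?thesis using ab by (auto simp: P_def)
  qed
  then have Pex: "\<exists>a. P a" by blast
  define a0 where "a0 = (LEAST a. P a)"
  have Pa0: "P a0" unfolding a0_def using Pex by (metis LeastI)
  have a0z: "a0 = 0"
  proof (rule ccontr)
    assume "a0 \<noteq> 0"
    then obtain a' where a': "a0 = Suc a'" by (cases a0) auto
    from Pa0 obtain b where b: "b > a0" "f a0 = f b" by (auto simp: P_def)
    then obtain b' where b': "b = Suc b'" by (cases b) auto
    have e: "g (f a') = g (f b')" using b a' b' by (simp add: f_def)
    show False
    proof (cases "f a' = f b'")
      case True
      then have "P a'" using b a' b' by (auto simp: P_def)
      then have "a0 \<le> a'" unfolding a0_def by (rule Least_le)
      then show False using a' by simp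
    next
      case False
      then have "g (f a') = j" using two_pre e by blast
      then have "P 0" using a' by (auto simp: P_def f_def intro!: exI[of _ "Suc a'"])
      then have "a0 \<le> 0" unfolding a0_def by (rule Least_le)
      then show False using a' by simp
    qed
  qed
  from Pa0 a0z obtain b0 where b0: "b0 > 0" "f b0 = j" by (auto simp: P_def f_def)
  define C where "C = range f"
  have CS: "C \<subseteq> S" using fS' by (auto simp: C_def)
  have jC: "j \<in> C" by (auto simp: C_def f_def intro!: range_eqI[of _ _ 0])
  have gC: "g x \<in> C" if "x \<in> C" for x
  proof -
    from that obtain m where m: "x = f m" by (auto simp: C_def)
    then have "g x = f (Suc m)" by (simp add: f_def)
    then show ?thesis by (simp add: C_def)
  qed
  have Cg: "x \<in> g ` C" if "x \<in> C" for x
  proof -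
    from that obtain m where m: "x = f m" by (auto simp: C_def)
    show ?thesis
    proof (cases m)
      case 0
      then have "x = f (Suc (b0 - 1))" using m b0 by (simp add: f_def)
      then show ?thesis by (auto simp: C_def f_def)
    next
      case (Suc m')
      then show ?thesis using m by (auto simp: C_def f_def)
    qed
  qed
  have iC: "i \<notin> C"
  proof
    assume "i \<in> C"
    then obtain m where "i = f m" by (auto simp: C_def)
    then show False using ij no_i by (cases m) (auto simp: f_def)
  qed
  have ginjC: "inj_on g C" using finite_surj_inj[of C g] CS fS Cg finite_subset by blast
  define \<rho> where "\<rho> l = (if l \<in> C then g l else l)" for l
  define \<tau> where "\<tau> l = (if l = j then i else if l \<in> C then l else g l)" for l
  have rho: "\<rho> permutes S"
  proof (rule inj_imp_permutes)
    show "inj_on \<rho> S"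
    proof (rule inj_onI)
      fix x y assume "x \<in> S" "y \<in> S" "\<rho> x = \<rho> y"
      then show "x = y"
      proof (cases "x \<in> C"; cases "y \<in> C")
        assume "x \<in> C" "y \<in> C" "\<rho> x = \<rho> y"
        then show ?thesis using ginjC by (simp add: \<rho>_def inj_on_def)
      qed (use gC in \<open>force simp: \<rho>_def\<close>)+
    qed
  qed (use fS gS CS in \<open>auto simp: \<rho>_def\<close>)
  have tau: "\<tau> permutes S"
  proof (rule inj_imp_permutes)
    show "inj_on \<tau> S"
    proof (rule inj_onI)
      fix x y assume x: "x \<in> S" and y: "y \<in> S" and e: "\<tau> x = \<tau> y"
      have c1: False if h: "l \<in> C" "l \<noteq> j" "l' \<notin> C" "l = g l'" for l l'
      proof -
        obtain c where c: "c \<in> C" "l = g c" using Cg[OF h(1)] by auto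
        then have "c \<noteq> l'" using h by auto
        then show False using two_pre[of c l'] c h by auto
      qed
      have c2: False if "l \<notin> C" "l' \<notin> C" "g l = g l'" "l \<noteq> l'" for l l'
      proof -
        have "g l = j" using two_pre that by blast
        obtain c where c: "c \<in> C" "j = g c" using Cg[OF jC] by auto
        then show False using three[of l l' c] that \<open>g l = j\<close> by auto
      qed
      show "x = y"
      proof (cases "x = j"; cases "y = j"; cases "x \<in> C"; cases "y \<in> C")
      qed (use e iC no_i c1 c2 jC in \<open>simp_all add: \<tau>_def\<close>; metis)+
    qed
  qed (use fS gS i j CS gout in \<open>auto simp: \<tau>_def S_def\<close>)
  have Wg: "(\<Prod>l\<in>S-{k}. D l (\<sigma> l)) * D k j = (\<Prod>l\<in>S. D l (g l))"
  proof -
    have "(\<Prod>l\<in>S. D l (g l)) = D k (g k) * (\<Prod>l\<in>S-{k}. D l (g l))"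
      using k fS by (simp add: S_def prod.remove)
    also have "(\<Prod>l\<in>S-{k}. D l (g l)) = (\<Prod>l\<in>S-{k}. D l (\<sigma> l))"
      by (rule prod.cong) (auto simp: g_def)
    finally show ?thesis by (simp add: g_def mult.commute)
  qed
  have Wsplit: "(\<Prod>l\<in>S. D l (\<rho> l)) * (\<Prod>l\<in>S-{j}. D l (\<tau> l)) = (\<Prod>l\<in>S. D l (g l))"
  proof -
    have "(\<Prod>l\<in>S-{j}. D l (\<tau> l)) = (\<Prod>l\<in>S. if l = j then 1 else D l (\<tau> l))"
      using j fS by (simp add: S_def prod.remove)
    then have "(\<Prod>l\<in>S. D l (\<rho> l)) * (\<Prod>l\<in>S-{j}. D l (\<tau> l))
        = (\<Prod>l\<in>S. D l (\<rho> l) * (if l = j then 1 else D l (\<tau> l)))"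
      by (simp add: prod.distrib)
    also have "\<dots> = (\<Prod>l\<in>S. D l (g l))"
    proof (rule prod.cong)
      fix l assume "l \<in> S"
      then show "D l (\<rho> l) * (if l = j then 1 else D l (\<tau> l)) = D l (g l)"
        using diag jC by (auto simp: \<rho>_def \<tau>_def S_def)
    qed simp
    finally show ?thesis .
  qed
  have "nle (\<Prod>l\<in>S. D l (g l)) (1 * (\<Prod>l\<in>S-{j}. D l (\<tau> l)))"
    unfolding Wsplit[symmetric] by (rule nle_mult[OF _ nle_refl]) (use perms rho in \<open>simp add: S_def\<close>)
  then show ?thesis using tau Wg by (intro exI[of _ \<tau>]) (simp add: S_def \<tau>_def)
qed



declare nle_trans[trans]

lemma nle_one_mult: "nle 1 a \<Longrightarrow> nle b (a * b)"
  using nle_mult[of 1 a b b] by simp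
lemma nle_mult_one: "nle a 1 \<Longrightarrow> nle (a * b) b"
  using nle_mult[of a 1 b b] by simp

lemma chainP:
  fixes M F :: "'g::linordered_ab_group_add smat"
  assumes h1: "\<And>a b c. a<n \<Longrightarrow> b<n \<Longrightarrow> c<n \<Longrightarrow> nle (M a b * F b c) (M a c)"
    and h2: "\<And>l. l<n \<Longrightarrow> nle 1 (F l l)"
    and h3: "\<And>\<rho>. \<rho> permutes {..<n} \<Longrightarrow> nle (\<Prod>l<n. F l (\<rho> l)) 1"
    and i: "i < n" and j: "j < n"
  shows "\<sigma> permutes {..<n} \<Longrightarrow> \<sigma> j = k \<Longrightarrow> nle (M i k * (\<Prod>l\<in>{..<n}-{j}. F l (\<sigma> l))) (M i j)"
proof (induction "card {l\<in>{..<n}. \<sigma> l \<noteq> l}" arbitrary: \<sigma> k rule: less_induct)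
  case less
  note s = less.prems(1) and sj = less.prems(2)
  have sinj: "\<sigma> a = \<sigma> b \<Longrightarrow> a = b" for a b using permutes_inj[OF s] by (auto dest: injD)
  have sin: "\<sigma> x < n" if "x < n" for x using permutes_in_image[OF s, of x] that by simp
  show ?case
  proof (cases "k = j")
    case True
    have "(\<Prod>l<n. F l (\<sigma> l)) = F j j * (\<Prod>l\<in>{..<n}-{j}. F l (\<sigma> l))"
      using j sj True by (simp add: prod.remove)
    then have X: "nle (\<Prod>l\<in>{..<n}-{j}. F l (\<sigma> l)) (\<Prod>l<n. F l (\<sigma> l))"
      using nle_one_mult[OF h2[OF j]] by simp
    have "nle (\<Prod>l\<in>{..<n}-{j}. F l (\<sigma> l)) 1" using X h3[OF s] by (rule nle_trans)
    then have "nle (M i k * (\<Prod>l\<in>{..<n}-{j}. F l (\<sigma> l))) (M i k * 1)"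
      by (rule nle_mult[OF nle_refl])
    then show ?thesis using True by simp
  next
    case False
    define m where "m = \<sigma> k"
    have k: "k < n" using sin[OF j] sj by simp
    have m: "m < n" using sin[OF k] by (simp add: m_def)
    define \<sigma>' where "\<sigma>' = \<sigma> \<circ> Transposition.transpose j k"
    have s': "\<sigma>' permutes {..<n}" unfolding \<sigma>'_def
      by (rule permutes_compose[OF permutes_swap_id s]) (use j k in auto)
    have s'j: "\<sigma>' j = m" by (simp add: \<sigma>'_def m_def)
    have s'k: "\<sigma>' k = k" using sj by (simp add: \<sigma>'_def)
    have s'o: "\<sigma>' l = \<sigma> l" if "l \<noteq> j" "l \<noteq> k" for l using that by (simp add: \<sigma>'_def)
    have sub: "{l\<in>{..<n}. \<sigma>' l \<noteq> l} \<subset> {l\<in>{..<n}. \<sigma> l \<noteq> l}"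
    proof
      show "{l\<in>{..<n}. \<sigma>' l \<noteq> l} \<subseteq> {l\<in>{..<n}. \<sigma> l \<noteq> l}"
        using s'o s'k sj False by auto (metis)
      have "\<sigma> k \<noteq> k" using sj False sinj by metis
      then show "{l\<in>{..<n}. \<sigma>' l \<noteq> l} \<noteq> {l\<in>{..<n}. \<sigma> l \<noteq> l}" using s'k k by blast
    qed
    have lt: "card {l\<in>{..<n}. \<sigma>' l \<noteq> l} < card {l\<in>{..<n}. \<sigma> l \<noteq> l}"
      by (rule psubset_card_mono[OF _ sub]) simp
    have IH: "nle (M i m * (\<Prod>l\<in>{..<n}-{j}. F l (\<sigma>' l))) (M i j)"
      using less.hyps[OF lt s' s'j] .
    define R where "R = (\<Prod>l\<in>{..<n}-{j}-{k}. F l (\<sigma> l))"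
    have W1: "(\<Prod>l\<in>{..<n}-{j}. F l (\<sigma> l)) = F k m * R"
      using k False by (simp add: R_def m_def prod.remove)
    have R': "(\<Prod>l\<in>{..<n}-{j}-{k}. F l (\<sigma>' l)) = R"
      unfolding R_def by (rule prod.cong) (auto simp: s'o)
    have W2: "(\<Prod>l\<in>{..<n}-{j}. F l (\<sigma>' l)) = F k k * R"
      using k False R' s'k by (simp add: prod.remove)
    have "nle (M i k * (F k m * R)) ((M i k * F k m) * (F k k * R))"
      unfolding mult.assoc by (intro nle_mult[OF nle_refl] nle_mult[OF nle_refl] nle_one_mult h2 k)
    also have "nle \<dots> (M i m * (F k k * R))"
      by (intro nle_mult[OF h1 nle_refl] i k m)
    finally have "nle (M i k * (F k m * R)) (M i m * (F k k * R))" .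
    then show ?thesis using IH W1 W2 nle_trans by metis
  qed
qed

lemma chainQ:
  fixes F :: "'g::linordered_ab_group_add smat"
  assumes h1: "\<And>a b c. a<n \<Longrightarrow> b<n \<Longrightarrow> c<n \<Longrightarrow> nle (F a b * F b c) (F a c)"
    and h2: "\<And>l. l<n \<Longrightarrow> nle 1 (F l l)"
    and h2': "\<And>l. l<n \<Longrightarrow> nle (F l l) 1"
  shows "\<rho> permutes {..<n} \<Longrightarrow> nle (\<Prod>l<n. F l (\<rho> l)) 1"
proof (induction "card {l\<in>{..<n}. \<rho> l \<noteq> l}" arbitrary: \<rho> rule: less_induct)
  case less
  note s = less.prems(1)
  have sinj: "\<rho> a = \<rho> b \<Longrightarrow> a = b" for a b using permutes_inj[OF s] by (auto dest: injD)
  have sin: "\<rho> x < n" if "x < n" for x using permutes_in_image[OF s, of x] that by simp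
  show ?case
  proof (cases "\<forall>l<n. \<rho> l = l")
    case True
    then have "(\<Prod>l<n. F l (\<rho> l)) = (\<Prod>l<n. F l l)" by simp
    also have "nle \<dots> (\<Prod>l<n. 1)" by (rule nle_prod) (simp add: h2')
    finally show ?thesis by simp
  next
    case False
    then obtain a where a: "a < n" "\<rho> a \<noteq> a" by blast
    define b where "b = \<rho> a"
    have b: "b < n" using sin[OF a(1)] by (simp add: b_def)
    have ab: "a \<noteq> b" using a by (simp add: b_def)
    define c where "c = \<rho> b"
    have c: "c < n" using sin[OF b] by (simp add: c_def)
    define \<rho>' where "\<rho>' = \<rho> \<circ> Transposition.transpose a b"
    have s': "\<rho>' permutes {..<n}" unfolding \<rho>'_def
      by (rule permutes_compose[OF permutes_swap_id s]) (use a b in auto)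
    have r'a: "\<rho>' a = c" by (simp add: \<rho>'_def c_def)
    have r'b: "\<rho>' b = b" by (simp add: \<rho>'_def b_def)
    have r'o: "\<rho>' l = \<rho> l" if "l \<noteq> a" "l \<noteq> b" for l using that by (simp add: \<rho>'_def)
    have rbb: "\<rho> b \<noteq> b" using ab sinj b_def by metis
    have sub: "{l\<in>{..<n}. \<rho>' l \<noteq> l} \<subset> {l\<in>{..<n}. \<rho> l \<noteq> l}"
    proof
      show "{l\<in>{..<n}. \<rho>' l \<noteq> l} \<subseteq> {l\<in>{..<n}. \<rho> l \<noteq> l}"
        using r'o r'b a by auto (metis)
      show "{l\<in>{..<n}. \<rho>' l \<noteq> l} \<noteq> {l\<in>{..<n}. \<rho> l \<noteq> l}" using r'b rbb b by blast
    qed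
    have lt: "card {l\<in>{..<n}. \<rho>' l \<noteq> l} < card {l\<in>{..<n}. \<rho> l \<noteq> l}"
      by (rule psubset_card_mono[OF _ sub]) simp
    have IH: "nle (\<Prod>l<n. F l (\<rho>' l)) 1" using less.hyps[OF lt s'] .
    define R where "R = (\<Prod>l\<in>{..<n}-{a}-{b}. F l (\<rho> l))"
    have R': "(\<Prod>l\<in>{..<n}-{a}-{b}. F l (\<rho>' l)) = R"
      unfolding R_def by (rule prod.cong) (auto simp: r'o)
    have W1: "(\<Prod>l<n. F l (\<rho> l)) = F a b * (F b c * R)"
      using a b ab by (simp add: R_def b_def c_def prod.remove)
    have W2a: "(\<Prod>l<n. F l (\<rho>' l)) = F a (\<rho>' a) * (\<Prod>l\<in>{..<n}-{a}. F l (\<rho>' l))"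
      using a by (simp add: prod.remove)
    have W2b: "(\<Prod>l\<in>{..<n}-{a}. F l (\<rho>' l)) = F b (\<rho>' b) * (\<Prod>l\<in>{..<n}-{a}-{b}. F l (\<rho>' l))"
      by (rule prod.remove) (use b ab in auto)
    have W2: "(\<Prod>l<n. F l (\<rho>' l)) = F a c * (F b b * R)"
      using W2a W2b R' r'a r'b by simp
    have "nle (F a b * (F b c * R)) ((F a b * F b c) * (F b b * R))"
      unfolding mult.assoc by (intro nle_mult[OF nle_refl] nle_mult[OF nle_refl] nle_one_mult h2 b)
    also have "nle \<dots> (F a c * (F b b * R))"
      by (intro nle_mult[OF h1 nle_refl] a b c)
    finally show ?thesis using IH W1 W2 nle_trans by metis
  qed
qed



lemma sdet_cong: "(\<And>a b. a < m \<Longrightarrow> b < m \<Longrightarrow> A a b = B a b) \<Longrightarrow> sdet m A = sdet m B"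
  unfolding sdet_def
  by (rule sum.cong[OF refl], rule prod.cong[OF refl]) (auto dest: permutes_in_image)

lemma nabla_cong:
  assumes "mat_eq n A B" shows "nabla n A = nabla n B"
proof -
  have d: "sdet n A = sdet n B" using assms by (intro sdet_cong) (auto simp: mat_eq_def)
  have "sadj n A i j = sadj n B i j" for i j
    unfolding sadj_def
    by (rule sdet_cong) (use assms in \<open>auto simp: mat_eq_def minor_def\<close>)
  then show ?thesis using d by (simp add: nabla_def fun_eq_iff)
qed

lemma finP: "finite {\<sigma>. \<sigma> permutes {..<n::nat}}"
  by (rule finite_permutations) simp

lemma def_perms:
  assumes "definite n D" "\<rho> permutes {..<n}"
  shows "nle (\<Prod>l<n. D l (\<rho> l)) 1"
proof -
  have "nle (\<Prod>l<n. D l (\<rho> l)) (sdet n D)"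
    unfolding sdet_def by (rule nle_sum_member[OF finP]) (use assms in simp)
  then show ?thesis using assms by (simp add: definite_def)
qed

lemma def_diag: "definite n D \<Longrightarrow> l < n \<Longrightarrow> D l l = 1"
  by (simp add: definite_def)

lemma fin_perm_set: "finite {\<sigma>. \<sigma> permutes {..<n::nat} \<and> P \<sigma>}"
  by (rule finite_subset[OF _ finP[of n]]) auto

lemma padj_id_ge:
  assumes "definite n D" "l < n" shows "nle 1 (padj n D l l)"
proof -
  have "(\<Prod>x\<in>{..<n}-{l}. D x (id x)) = 1" using assms by (intro prod.neutral) (auto simp: definite_def)
  moreover have "nle (\<Prod>x\<in>{..<n}-{l}. D x (id x)) (padj n D l l)"
    unfolding padj_def by (rule nle_sum_member[OF fin_perm_set]) (use permutes_id[of "{..<n}", unfolded id_def] in simp)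
  ultimately show ?thesis by simp
qed

lemma padj_mult_le:
  assumes D: "definite n D" and i: "i < n" and j: "j < n" and k: "k < n"
  shows "nle (padj n D i k * D k j) (padj n D i j)"
  unfolding padj_def[of n D i k] sum_distrib_right
proof (rule nle_sum_upper[OF fin_perm_set])
  fix \<sigma> assume "\<sigma> \<in> {\<sigma>. \<sigma> permutes {..<n} \<and> \<sigma> k = i}"
  then have s: "\<sigma> permutes {..<n}" "\<sigma> k = i" by auto
  show "nle ((\<Prod>l\<in>{..<n}-{k}. D l (\<sigma> l)) * D k j) (padj n D i j)"
  proof (cases "i = j")
    case True
    have "(\<Prod>l\<in>{..<n}-{k}. D l (\<sigma> l)) * D k j = (\<Prod>l<n. D l (\<sigma> l))"
      using k s True by (simp add: prod.remove mult.commute)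
    also have "nle \<dots> 1" by (rule def_perms[OF D s(1)])
    also have "nle 1 (padj n D i j)" using padj_id_ge[OF D i] True by simp
    finally show ?thesis .
  next
    case False
    obtain \<tau> where t: "\<tau> permutes {..<n}" "\<tau> j = i"
      "nle ((\<Prod>l\<in>{..<n}-{k}. D l (\<sigma> l)) * D k j) (\<Prod>l\<in>{..<n}-{j}. D l (\<tau> l))"
      using exchange[of n D \<sigma> k i j, OF def_diag[OF D] def_perms[OF D] s(1) s(2) False i j k] by blast
    have "nle (\<Prod>l\<in>{..<n}-{j}. D l (\<tau> l)) (padj n D i j)"
      unfolding padj_def by (rule nle_sum_member[OF fin_perm_set]) (use t in auto)
    then show ?thesis using t(3) nle_trans by blast
  qed
qed

lemma padj_diag_le:
  assumes D: "definite n D" and l: "l < n" shows "nle (padj n D l l) 1"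
  unfolding padj_def
proof (rule nle_sum_upper[OF fin_perm_set])
  fix \<sigma> assume "\<sigma> \<in> {\<sigma>. \<sigma> permutes {..<n} \<and> \<sigma> l = l}"
  then have s: "\<sigma> permutes {..<n}" "\<sigma> l = l" by auto
  have "(\<Prod>x\<in>{..<n}-{l}. D x (\<sigma> x)) = (\<Prod>x<n. D x (\<sigma> x))"
    using l s def_diag[OF D l] by (simp add: prod.remove)
  then show "nle (\<Prod>x\<in>{..<n}-{l}. D x (\<sigma> x)) 1" using def_perms[OF D s(1)] by simp
qed

lemma E_tri:
  assumes D: "definite n D" and a: "a < n" and b: "b < n" and c: "c < n"
  shows "nle (padj n D a b * padj n D b c) (padj n D a c)"
  unfolding padj_def[of n D b c] sum_distrib_left
proof (rule nle_sum_upper[OF fin_perm_set])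
  fix \<sigma> assume "\<sigma> \<in> {\<sigma>. \<sigma> permutes {..<n} \<and> \<sigma> c = b}"
  then have s: "\<sigma> permutes {..<n}" "\<sigma> c = b" by auto
  show "nle (padj n D a b * (\<Prod>l\<in>{..<n}-{c}. D l (\<sigma> l))) (padj n D a c)"
    by (rule chainP[where F = D, OF _ _ _ a c s]) 
       (use padj_mult_le[OF D] def_diag[OF D] def_perms[OF D] in auto)
qed

lemma E_perm:
  assumes D: "definite n D" "\<rho> permutes {..<n}"
  shows "nle (\<Prod>l<n. padj n D l (\<rho> l)) 1"
  by (rule chainQ[OF _ _ _ D(2)]) (use E_tri[OF D(1)] padj_id_ge[OF D(1)] padj_diag_le[OF D(1)] in auto)

lemma E_adj_le:
  assumes D: "definite n D" and s: "\<sigma> permutes {..<n}" "\<sigma> j = i" and i: "i < n" and j: "j < n"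
  shows "nle (\<Prod>l\<in>{..<n}-{j}. padj n D l (\<sigma> l)) (padj n D i j)"
proof -
  have "nle (padj n D i i * (\<Prod>l\<in>{..<n}-{j}. padj n D l (\<sigma> l))) (padj n D i j)"
    by (rule chainP[OF _ _ _ i j s]) (use E_tri[OF D] padj_id_ge[OF D] E_perm[OF D] in auto)
  then show ?thesis using nle_one_mult[OF padj_id_ge[OF D i]] nle_trans by blast
qed

lemma E_det:
  assumes D: "definite n D" shows "nu (sdet n (padj n D)) = nu 1"
proof (rule nu_eqI)
  show "nle (sdet n (padj n D)) 1"
    unfolding sdet_def by (rule nle_sum_upper[OF finP]) (use E_perm[OF D] in simp)
  have "nle (\<Prod>l<n. 1) (\<Prod>l<n. padj n D l (id l))"
    by (rule nle_prod) (use padj_id_ge[OF D] in auto)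
  also have "nle \<dots> (sdet n (padj n D))"
    unfolding sdet_def by (rule nle_sum_member[OF finP]) (use permutes_id[of "{..<n}", unfolded id_def] in simp)
  finally show "nle 1 (sdet n (padj n D))" by simp
qed

lemma E_padj:
  assumes D: "definite n D" and i: "i < n" and j: "j < n"
  shows "nu (padj n (padj n D) i j) = nu (padj n D i j)"
proof (rule nu_eqI)
  show "nle (padj n (padj n D) i j) (padj n D i j)"
    unfolding padj_def[of n "padj n D"]
    by (rule nle_sum_upper[OF fin_perm_set]) (use E_adj_le[OF D _ _ i j] in auto)
  define t where "t = Transposition.transpose i j"
  have t: "t permutes {..<n}" "t j = i" using i j by (auto simp: t_def permutes_swap_id)
  have "nle (padj n D i j) (\<Prod>l\<in>{..<n}-{j}. padj n D l (t l))"
  proof (cases "i = j")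
    case True
    then have "(\<Prod>l\<in>{..<n}-{j}. padj n D l (t l)) = (\<Prod>l\<in>{..<n}-{j}. padj n D l l)"
      by (simp add: t_def)
    moreover have "nle 1 (\<Prod>l\<in>{..<n}-{j}. padj n D l l)"
      using nle_prod[of "{..<n}-{j}" "\<lambda>_. 1" "\<lambda>l. padj n D l l"] padj_id_ge[OF D] by simp
    ultimately show ?thesis using padj_diag_le[OF D j] True nle_trans by metis
  next
    case False
    have "(\<Prod>l\<in>{..<n}-{j}. padj n D l (t l)) = padj n D i (t i) * (\<Prod>l\<in>{..<n}-{j}-{i}. padj n D l (t l))"
      by (rule prod.remove) (use i False in auto)
    also have "(\<Prod>l\<in>{..<n}-{j}-{i}. padj n D l (t l)) = (\<Prod>l\<in>{..<n}-{j}-{i}. padj n D l l)"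
      by (rule prod.cong) (auto simp: t_def)
    finally have eq: "(\<Prod>l\<in>{..<n}-{j}. padj n D l (t l)) = padj n D i j * (\<Prod>l\<in>{..<n}-{j}-{i}. padj n D l l)"
      by (simp add: t_def)
    have "nle 1 (\<Prod>l\<in>{..<n}-{j}-{i}. padj n D l l)"
      using nle_prod[of "{..<n}-{j}-{i}" "\<lambda>_. 1" "\<lambda>l. padj n D l l"] padj_id_ge[OF D] by simp
    then show ?thesis unfolding eq using nle_mult[OF nle_refl, of 1 _ "padj n D i j"] by simp
  qed
  also have "nle \<dots> (padj n (padj n D) i j)"
    unfolding padj_def[of n "padj n D"] by (rule nle_sum_member[OF fin_perm_set]) (use t in auto)
  finally show "nle (padj n D i j) (padj n (padj n D) i j)" .
qed

lemma nabla_def_eq: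
  assumes D: "definite n D" and i: "i < n" and j: "j < n"
  shows "nabla n D i j = padj n D i j"
  using D sadj_padj[OF i j] by (simp add: nabla_def definite_def)

lemma core1:
  assumes D: "definite n D" and i: "i < n" and j: "j < n"
  shows "nu (nabla n (nabla n D) i j) = nu (nabla n D i j)"
proof -
  have "mat_eq n (nabla n D) (padj n D)" using nabla_def_eq[OF D] by (simp add: mat_eq_def)
  then have "nabla n (nabla n D) = nabla n (padj n D)" by (rule nabla_cong)
  then have "nu (nabla n (nabla n D) i j) = nu (st_inv (sdet n (padj n D))) * nu (padj n (padj n D) i j)"
    by (simp add: nabla_def nu_mult sadj_padj[OF i j])
  also have "\<dots> = nu (st_inv 1) * nu (padj n D i j)"
    using nu_st_inv[OF E_det[OF D]] E_padj[OF D i j] by simp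
  finally show ?thesis using nabla_def_eq[OF D i j] by (simp add: nu_mult[symmetric])
qed

lemma core2:
  assumes D: "definite n D" and i: "i < n" and j: "j < n"
  shows "nu (mat_mult n (nabla n D) D i j) = nu (nabla n D i j)"
proof -
  have "mat_mult n (nabla n D) D i j = (\<Sum>k<n. padj n D i k * D k j)"
    unfolding mat_mult_def by (rule sum.cong) (use nabla_def_eq[OF D i] in auto)
  moreover have "nu (\<Sum>k<n. padj n D i k * D k j) = nu (padj n D i j)"
  proof (rule nu_eqI)
    show "nle (\<Sum>k<n. padj n D i k * D k j) (padj n D i j)"
      by (rule nle_sum_upper) (use padj_mult_le[OF D i j] in auto)
    have "nle (padj n D i j * D j j) (\<Sum>k<n. padj n D i k * D k j)"
      by (rule nle_sum_member) (use j in auto)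
    then show "nle (padj n D i j) (\<Sum>k<n. padj n D i k * D k j)" using def_diag[OF D j] by simp
  qed
  ultimately show ?thesis using nabla_def_eq[OF D i j] by simp
qed



lemma one_ne_zero_st: "(1::'g::linordered_ab_group_add st) \<noteq> 0"
  by (simp add: one_st_def zero_st_def)

lemma inv_gp:
  fixes P :: "'g::linordered_ab_group_add smat"
  assumes "invertible_smat n P"
  obtains \<pi> where "\<pi> permutes {..<n}" "\<And>i. i<n \<Longrightarrow> tangible (P i (\<pi> i))"
    "\<And>i j. i<n \<Longrightarrow> j<n \<Longrightarrow> j \<noteq> \<pi> i \<Longrightarrow> P i j = 0"
proof -
  obtain B where PB': "\<forall>i<n. \<forall>j<n. (\<Sum>k<n. P i k * B k j) = mat_id i j"
    and BP': "\<forall>i<n. \<forall>j<n. (\<Sum>k<n. B i k * P k j) = mat_id i j"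
    using assms unfolding invertible_smat_def mat_eq_def mat_mult_def by blast
  have PB: "\<And>i j. i<n \<Longrightarrow> j<n \<Longrightarrow> (\<Sum>k<n. P i k * B k j) = mat_id i j" using PB' by blast
  have BP: "\<And>i j. i<n \<Longrightarrow> j<n \<Longrightarrow> (\<Sum>k<n. B i k * P k j) = mat_id i j" using BP' by blast
  have f1: "\<exists>k<n. P i k \<noteq> 0 \<and> B k i \<noteq> 0" if "i < n" for i
  proof (rule ccontr)
    assume "\<not> ?thesis"
    then have "(\<Sum>k<n. P i k * B k i) = 0" by (auto simp: sum_eq_zero_iff mult_eq_zero_iff_st)
    then show False using PB[OF that that] one_ne_zero_st by (simp add: mat_id_def)
  qed
  have f4: "\<exists>l<n. B k l \<noteq> 0 \<and> P l k \<noteq> 0" if "k < n" for k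
  proof (rule ccontr)
    assume "\<not> ?thesis"
    then have "(\<Sum>l<n. B k l * P l k) = 0" by (auto simp: sum_eq_zero_iff mult_eq_zero_iff_st)
    then show False using BP[OF that that] one_ne_zero_st by (simp add: mat_id_def)
  qed
  have f2: "B k l = 0" if "i<n" "l<n" "l \<noteq> i" "k<n" "P i k \<noteq> 0" for i l k
  proof -
    have "(\<Sum>k<n. P i k * B k l) = 0" using PB[of i l] that by (simp add: mat_id_def zero_st_def)
    then have "P i k * B k l = 0" using that(4) by (simp add: sum_eq_zero_iff)
    then show ?thesis using that(5) by (simp add: mult_eq_zero_iff_st)
  qed
  have f3: "P l k' = 0" if "k<n" "k'<n" "k \<noteq> k'" "l<n" "B k l \<noteq> 0" for k k' l
  proof -
    have "(\<Sum>l<n. B k l * P l k') = 0" using BP[of k k'] that by (simp add: mat_id_def zero_st_def)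
    then have "B k l * P l k' = 0" using that(4) by (simp add: sum_eq_zero_iff)
    then show ?thesis using that(5) by (simp add: mult_eq_zero_iff_st)
  qed
  define \<pi> where "\<pi> i = (if i < n then SOME k. k<n \<and> P i k \<noteq> 0 \<and> B k i \<noteq> 0 else i)" for i
  have pi: "\<pi> i < n \<and> P i (\<pi> i) \<noteq> 0 \<and> B (\<pi> i) i \<noteq> 0" if "i < n" for i
    using someI_ex[OF f1[OF that]] that by (simp add: \<pi>_def)
  have uniq: "k' = \<pi> i" if h: "i<n" "k'<n" "P i k' \<noteq> 0" for i k'
  proof (rule ccontr)
    assume ne: "k' \<noteq> \<pi> i"
    obtain l where l: "l<n" "B k' l \<noteq> 0" "P l k' \<noteq> 0" using f4[OF h(2)] by blast
    have "l = i" using f2[of i l k'] h l by blast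
    then show False using f3[of k' "\<pi> i" i] pi[OF h(1)] ne h l by auto
  qed
  have inj: "inj_on \<pi> {..<n}"
  proof (rule inj_onI)
    fix i i' assume i: "i \<in> {..<n}" and i': "i' \<in> {..<n}" and e: "\<pi> i = \<pi> i'"
    show "i = i'"
    proof (rule ccontr)
      assume ne: "i \<noteq> i'"
      obtain l where l: "l<n" "B (\<pi> i) l \<noteq> 0" using f4[of "\<pi> i"] pi i by auto
      have "l = i" using f2[of i l "\<pi> i"] pi i l by auto
      moreover have "l = i'" using f2[of i' l "\<pi> i"] pi i' l e by auto
      ultimately show False using ne by simp
    qed
  qed
  have perm: "\<pi> permutes {..<n}"
    by (rule inj_imp_permutes[OF inj]) (use pi in \<open>auto simp: \<pi>_def\<close>)
  have zero: "P i j = 0" if "i<n" "j<n" "j \<noteq> \<pi> i" for i j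
    using uniq[of i j] that by auto
  have tang: "tangible (P i (\<pi> i))" if i: "i<n" for i
  proof -
    have "(\<Sum>k<n. P i k * B k i) = P i (\<pi> i) * B (\<pi> i) i"
      by (rule sum_single) (use pi[OF i] zero[OF i] in auto)
    then have "P i (\<pi> i) * B (\<pi> i) i = 1" using PB[OF i i] by (simp add: mat_id_def)
    then show ?thesis using tangible_mult by (metis one_st_def tangible.simps(1))
  qed
  show ?thesis using that perm tang zero by blast
qed

lemma rowop_det:
  fixes D :: "'g::linordered_ab_group_add smat"
  assumes pi: "\<pi> permutes {..<n}" and A: "\<And>i j. i<n \<Longrightarrow> j<n \<Longrightarrow> A i j = p i * D (\<pi> i) j"
  shows "sdet n A = (\<Prod>l<n. p l) * sdet n D"
proof -
  have "sdet n A = (\<Sum>\<sigma>\<in>{\<sigma>. \<sigma> permutes {..<n}}. (\<Prod>l<n. p l) * (\<Prod>l<n. D (\<pi> l) (\<sigma> l)))"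
    unfolding sdet_def
  proof (rule sum.cong[OF refl])
    fix \<sigma> assume "\<sigma> \<in> {\<sigma>. \<sigma> permutes {..<n}}"
    then have s: "\<sigma> permutes {..<n}" by simp
    have "(\<Prod>l<n. A l (\<sigma> l)) = (\<Prod>l<n. p l * D (\<pi> l) (\<sigma> l))"
      by (rule prod.cong[OF refl]) (use A permutes_in_image[OF s] in simp)
    then show "(\<Prod>l<n. A l (\<sigma> l)) = (\<Prod>l<n. p l) * (\<Prod>l<n. D (\<pi> l) (\<sigma> l))"
      by (simp add: prod.distrib)
  qed
  also have "\<dots> = (\<Prod>l<n. p l) * (\<Sum>\<sigma>\<in>{\<sigma>. \<sigma> permutes {..<n}}. (\<Prod>m<n. D m ((\<sigma> \<circ> inv \<pi>) m)))"
  proof -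
    have "(\<Prod>l<n. D (\<pi> l) (\<sigma> l)) = (\<Prod>m<n. D m ((\<sigma> \<circ> inv \<pi>) m))" for \<sigma>
      using prod.permute[OF pi, of "\<lambda>m. D m ((\<sigma> \<circ> inv \<pi>) m)"] pi
      by (simp add: o_def permutes_inverses)
    then show ?thesis by (simp add: sum_distrib_left)
  qed
  also have "(\<Sum>\<sigma>\<in>{\<sigma>. \<sigma> permutes {..<n}}. (\<Prod>m<n. D m ((\<sigma> \<circ> inv \<pi>) m))) = sdet n D"
    unfolding sdet_def by (rule sum_permutations_compose_right[OF permutes_inv[OF pi], symmetric])
  finally show ?thesis .
qed

lemma rowop_padj:
  fixes D :: "'g::linordered_ab_group_add smat"
  assumes pi: "\<pi> permutes {..<n}" and A: "\<And>i j. i<n \<Longrightarrow> j<n \<Longrightarrow> A i j = p i * D (\<pi> i) j"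
    and j: "j < n"
  shows "padj n A i j = (\<Prod>l\<in>{..<n}-{j}. p l) * padj n D i (\<pi> j)"
proof -
  have pin: "\<pi> x < n" if "x < n" for x using permutes_in_image[OF pi, of x] that by simp
  have pinj: "\<pi> a = \<pi> b \<Longrightarrow> a = b" for a b using permutes_inj[OF pi] by (auto dest: injD)
  have "padj n A i j = (\<Sum>\<sigma>\<in>{\<sigma>. \<sigma> permutes {..<n} \<and> \<sigma> j = i}. (\<Prod>l\<in>{..<n}-{j}. p l) * (\<Prod>l\<in>{..<n}-{j}. D (\<pi> l) (\<sigma> l)))"
    unfolding padj_def
  proof (rule sum.cong[OF refl])
    fix \<sigma> assume "\<sigma> \<in> {\<sigma>. \<sigma> permutes {..<n} \<and> \<sigma> j = i}"
    then have s: "\<sigma> permutes {..<n}" by simp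
    have "(\<Prod>l\<in>{..<n}-{j}. A l (\<sigma> l)) = (\<Prod>l\<in>{..<n}-{j}. p l * D (\<pi> l) (\<sigma> l))"
      by (rule prod.cong[OF refl]) (use A permutes_in_image[OF s] in simp)
    then show "(\<Prod>l\<in>{..<n}-{j}. A l (\<sigma> l)) = (\<Prod>l\<in>{..<n}-{j}. p l) * (\<Prod>l\<in>{..<n}-{j}. D (\<pi> l) (\<sigma> l))"
      by (simp add: prod.distrib)
  qed
  also have "\<dots> = (\<Prod>l\<in>{..<n}-{j}. p l) * (\<Sum>\<sigma>\<in>{\<sigma>. \<sigma> permutes {..<n} \<and> \<sigma> j = i}. (\<Prod>m\<in>{..<n}-{\<pi> j}. D m ((\<sigma> \<circ> inv \<pi>) m)))"
  proof -
    have im: "\<pi> ` ({..<n}-{j}) = {..<n}-{\<pi> j}"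
      using permutes_image[OF pi] pinj by auto
    have "(\<Prod>l\<in>{..<n}-{j}. D (\<pi> l) (\<sigma> l)) = (\<Prod>m\<in>{..<n}-{\<pi> j}. D m ((\<sigma> \<circ> inv \<pi>) m))" for \<sigma>
      unfolding im[symmetric]
      by (subst prod.reindex) (use permutes_inj_on[OF pi] pi in \<open>auto simp: o_def permutes_inverses\<close>)
    then show ?thesis by (simp add: sum_distrib_left)
  qed
  also have "(\<Sum>\<sigma>\<in>{\<sigma>. \<sigma> permutes {..<n} \<and> \<sigma> j = i}. (\<Prod>m\<in>{..<n}-{\<pi> j}. D m ((\<sigma> \<circ> inv \<pi>) m))) = padj n D i (\<pi> j)"
    unfolding padj_def
  proof (rule sum.reindex_bij_witness[where j = "\<lambda>\<sigma>. \<sigma> \<circ> inv \<pi>" and i = "\<lambda>\<tau>. \<tau> \<circ> \<pi>"])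
    fix \<sigma> assume "\<sigma> \<in> {\<sigma>. \<sigma> permutes {..<n} \<and> \<sigma> j = i}"
    then have s: "\<sigma> permutes {..<n}" "\<sigma> j = i" by auto
    show "\<sigma> \<circ> inv \<pi> \<circ> \<pi> = \<sigma>" using pi by (simp add: fun_eq_iff permutes_inverses)
    show "\<sigma> \<circ> inv \<pi> \<in> {\<tau>. \<tau> permutes {..<n} \<and> \<tau> (\<pi> j) = i}"
      using s pi by (simp add: permutes_compose permutes_inv permutes_inverses)
  next
    fix \<tau> assume "\<tau> \<in> {\<tau>. \<tau> permutes {..<n} \<and> \<tau> (\<pi> j) = i}"
    then have t: "\<tau> permutes {..<n}" "\<tau> (\<pi> j) = i" by auto
    show "\<tau> \<circ> \<pi> \<circ> inv \<pi> = \<tau>" using pi by (simp add: fun_eq_iff permutes_inverses)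
    show "\<tau> \<circ> \<pi> \<in> {\<sigma>. \<sigma> permutes {..<n} \<and> \<sigma> j = i}"
      using t pi by (simp add: permutes_compose)
  qed simp
  finally show ?thesis .
qed

lemma rowop_nabla:
  fixes D :: "'g::linordered_ab_group_add smat"
  assumes pi: "\<pi> permutes {..<n}" and A: "\<And>i j. i<n \<Longrightarrow> j<n \<Longrightarrow> A i j = p i * D (\<pi> i) j"
    and tp: "\<And>i. i<n \<Longrightarrow> tangible (p i)" and i: "i < n" and j: "j < n"
  shows "nabla n A i j = st_inv (p j) * nabla n D i (\<pi> j)"
proof -
  have pj: "\<pi> j < n" using permutes_in_image[OF pi, of j] j by simp
  define Q where "Q = (\<Prod>l\<in>{..<n}-{j}. p l)"
  have tQ: "tangible Q" unfolding Q_def by (rule tangible_prod) (use tp in auto)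
  have pr: "(\<Prod>l<n. p l) = p j * Q" unfolding Q_def using j by (simp add: prod.remove)
  have d: "sdet n A = (\<Prod>l<n. p l) * sdet n D" using pi A by (rule rowop_det)
  have a: "padj n A i j = Q * padj n D i (\<pi> j)" unfolding Q_def using pi A j by (rule rowop_padj)
  have "nabla n A i j = st_inv (p j * Q * sdet n D) * (Q * sadj n D i (\<pi> j))"
    unfolding nabla_def d sadj_padj[OF i j] a sadj_padj[OF i pj] pr by simp
  also have "\<dots> = st_inv (p j) * (st_inv Q * Q) * (st_inv (sdet n D) * sadj n D i (\<pi> j))"
    by (simp add: st_inv_mult ac_simps)
  also have "\<dots> = st_inv (p j) * nabla n D i (\<pi> j)"
    using st_inv_tng[OF tQ] by (simp add: nabla_def)
  finally show ?thesis .
qed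



definition tr :: "'g smat \<Rightarrow> 'g smat" where "tr M = (\<lambda>i j. M j i)"

lemma tr_tr[simp]: "tr (tr M) = M" by (simp add: tr_def)
lemma tr_apply[simp]: "tr M i j = M j i" by (simp add: tr_def)

lemma sdet_tr: "sdet n (tr M) = sdet n M"
proof -
  have "sdet n (tr M) = (\<Sum>\<sigma>\<in>{\<sigma>. \<sigma> permutes {..<n}}. \<Prod>m<n. M m (inv \<sigma> m))"
    unfolding sdet_def
  proof (rule sum.cong[OF refl])
    fix \<sigma> assume "\<sigma> \<in> {\<sigma>. \<sigma> permutes {..<n}}"
    then have s: "\<sigma> permutes {..<n}" by simp
    show "(\<Prod>i<n. tr M i (\<sigma> i)) = (\<Prod>m<n. M m (inv \<sigma> m))"
      using prod.permute[OF s, of "\<lambda>m. M m (inv \<sigma> m)"] s by (simp add: o_def permutes_inverses)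
  qed
  also have "\<dots> = sdet n M"
    unfolding sdet_def by (rule sum_permutations_inverse[symmetric])
  finally show ?thesis .
qed

lemma padj_tr:
  assumes i: "i < n" and j: "j < n"
  shows "padj n (tr M) i j = padj n M j i"
proof -
  have "padj n (tr M) i j = (\<Sum>\<sigma>\<in>{\<sigma>. \<sigma> permutes {..<n} \<and> \<sigma> j = i}. \<Prod>m\<in>{..<n}-{i}. M m (inv \<sigma> m))"
    unfolding padj_def
  proof (rule sum.cong[OF refl])
    fix \<sigma> assume "\<sigma> \<in> {\<sigma>. \<sigma> permutes {..<n} \<and> \<sigma> j = i}"
    then have s: "\<sigma> permutes {..<n}" "\<sigma> j = i" by auto
    have sinj: "\<sigma> a = \<sigma> b \<Longrightarrow> a = b" for a b using permutes_inj[OF s(1)] by (auto dest: injD)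
    have im: "\<sigma> ` ({..<n}-{j}) = {..<n}-{i}"
      using permutes_image[OF s(1)] s(2) sinj by auto
    show "(\<Prod>l\<in>{..<n}-{j}. tr M l (\<sigma> l)) = (\<Prod>m\<in>{..<n}-{i}. M m (inv \<sigma> m))"
      unfolding im[symmetric]
      by (subst prod.reindex) (use permutes_inj_on[OF s(1)] s(1) in \<open>auto simp: o_def permutes_inverses\<close>)
  qed
  also have "\<dots> = padj n M j i"
    unfolding padj_def
  proof (rule sum.reindex_bij_witness[where j = "inv" and i = "inv"])
    fix \<sigma> assume "\<sigma> \<in> {\<sigma>. \<sigma> permutes {..<n} \<and> \<sigma> j = i}"
    then have s: "\<sigma> permutes {..<n}" "\<sigma> j = i" by auto
    show "inv (inv \<sigma>) = \<sigma>" using permutes_inv_inv[OF s(1)] .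
    show "inv \<sigma> \<in> {\<tau>. \<tau> permutes {..<n} \<and> \<tau> i = j}"
      using s permutes_inv[OF s(1)] permutes_inv_eq[OF s(1)] by auto
  next
    fix \<tau> assume "\<tau> \<in> {\<tau>. \<tau> permutes {..<n} \<and> \<tau> i = j}"
    then have t: "\<tau> permutes {..<n}" "\<tau> i = j" by auto
    show "inv (inv \<tau>) = \<tau>" using permutes_inv_inv[OF t(1)] .
    show "inv \<tau> \<in> {\<sigma>. \<sigma> permutes {..<n} \<and> \<sigma> j = i}"
      using t permutes_inv[OF t(1)] permutes_inv_eq[OF t(1)] by auto
  qed simp
  finally show ?thesis .
qed

lemma nabla_tr:
  assumes i: "i < n" and j: "j < n"
  shows "nabla n (tr M) i j = nabla n M j i"
  unfolding nabla_def sdet_tr sadj_padj[OF i j] sadj_padj[OF j i] padj_tr[OF i j] ..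

lemma mat_mult_tr: "mat_mult n (tr A) (tr B) = tr (mat_mult n B A)"
  by (simp add: mat_mult_def tr_def fun_eq_iff mult.commute)

lemma tr_mat_id[simp]: "tr mat_id = mat_id" by (auto simp: mat_id_def tr_def fun_eq_iff)

lemma mat_eq_tr: "mat_eq n A B \<Longrightarrow> mat_eq n (tr A) (tr B)"
  by (simp add: mat_eq_def)

lemma definite_tr: "definite n D \<Longrightarrow> definite n (tr D)"
  by (simp add: definite_def sdet_tr)

lemma invertible_tr: "invertible_smat n P \<Longrightarrow> invertible_smat n (tr P)"
proof -
  assume "invertible_smat n P"
  then obtain B where "mat_eq n (mat_mult n P B) mat_id" "mat_eq n (mat_mult n B P) mat_id"
    by (auto simp: invertible_smat_def)
  then have "mat_eq n (mat_mult n (tr P) (tr B)) mat_id" "mat_eq n (mat_mult n (tr B) (tr P)) mat_id"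
    using mat_eq_tr by (fastforce simp: mat_mult_tr)+
  then show ?thesis by (auto simp: invertible_smat_def)
qed



lemma left_part:
  fixes A P D :: "'g::linordered_ab_group_add smat"
  assumes P: "invertible_smat n P" and D: "definite n D" and A: "mat_eq n A (mat_mult n P D)"
  shows "nu_equiv n (nabla n (nabla n D)) (nabla n D)
       \<and> nu_equiv n (nabla n D) (mat_mult n (nabla n A) A)
       \<and> nu_equiv n (nabla n (nabla n A)) (mat_mult n (mat_mult n P (nabla n A)) P)"
proof -
  obtain \<pi> where pi: "\<pi> permutes {..<n}" and tp: "\<And>i. i<n \<Longrightarrow> tangible (P i (\<pi> i))"
    and zero: "\<And>i j. i<n \<Longrightarrow> j<n \<Longrightarrow> j \<noteq> \<pi> i \<Longrightarrow> P i j = 0"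
    using inv_gp[OF P] by blast
  define p where "p i = P i (\<pi> i)" for i
  have pin: "\<pi> x < n" if "x < n" for x using permutes_in_image[OF pi, of x] that by simp
  have rowmul: "mat_mult n P M i j = p i * M (\<pi> i) j" if "i<n" for M i j
    unfolding mat_mult_def p_def
    by (rule sum_single) (use that pin zero in auto)
  have Ai: "A i j = p i * D (\<pi> i) j" if "i<n" "j<n" for i j
    using A that rowmul by (simp add: mat_eq_def)
  have tpp: "tangible (p i)" if "i<n" for i using tp that by (simp add: p_def)
  define E where "E = nabla n D"
  have nA: "nabla n A i j = st_inv (p j) * E i (\<pi> j)" if "i<n" "j<n" for i j
    unfolding E_def using pi Ai tpp that by (rule rowop_nabla)
  have c1: "nu (nabla n E i j) = nu (E i j)" if "i<n" "j<n" for i j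
    unfolding E_def by (rule core1[OF D that])
  have p1: "nu_equiv n (nabla n (nabla n D)) (nabla n D)"
    using c1 by (simp add: nu_equiv_def E_def)
  have p2: "nu_equiv n (nabla n D) (mat_mult n (nabla n A) A)"
    unfolding nu_equiv_def
  proof (intro allI impI)
    fix i j assume i: "i<n" and j: "j<n"
    have "mat_mult n (nabla n A) A i j = (\<Sum>k<n. E i (\<pi> k) * D (\<pi> k) j)"
      unfolding mat_mult_def
    proof (rule sum.cong[OF refl])
      fix k assume "k \<in> {..<n}"
      then have k: "k < n" by simp
      show "nabla n A i k * A k j = E i (\<pi> k) * D (\<pi> k) j"
        using nA[OF i k] Ai[OF k j] st_inv_tng[OF tpp[OF k]]
        by (simp add: ac_simps) (metis mult.assoc mult.left_commute mult_1)
    qed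
    also have "\<dots> = mat_mult n E D i j"
      unfolding mat_mult_def using sum.permute[OF pi, of "\<lambda>m. E i m * D m j"] by (simp add: o_def)
    finally show "nu (nabla n D i j) = nu (mat_mult n (nabla n A) A i j)"
      using core2[OF D i j] by (simp add: E_def)
  qed
  have p3: "nu_equiv n (nabla n (nabla n A)) (mat_mult n (mat_mult n P (nabla n A)) P)"
    unfolding nu_equiv_def
  proof (intro allI impI)
    fix i j assume i: "i<n" and j: "j<n"
    define M where "M = nabla n A"
    have trM: "tr M a b = st_inv (p a) * tr E (\<pi> a) b" if "a<n" "b<n" for a b
      using nA[of b a] that by (simp add: M_def)
    have ntrM: "nabla n (tr M) a b = p b * nabla n E (\<pi> b) a" if "a<n" "b<n" for a b
    proof -
      have "nabla n (tr M) a b = st_inv (st_inv (p b)) * nabla n (tr E) a (\<pi> b)"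
        by (rule rowop_nabla[of \<pi> n "tr M" "\<lambda>a. st_inv (p a)" "tr E", OF pi trM])
           (use tpp that in \<open>auto simp: tangible_st_inv\<close>)
      then show ?thesis using nabla_tr[OF that(1) pin[OF that(2)], of E] by (simp add: st_inv_inv)
    qed
    have lhs: "nabla n M i j = p i * nabla n E (\<pi> i) j"
      using nabla_tr[OF i j, of "tr M"] ntrM[OF j i] by simp
    have "mat_mult n (mat_mult n P M) P i j = (\<Sum>k<n. (p i * M (\<pi> i) k) * P k j)"
      unfolding mat_mult_def[of n "mat_mult n P M"] using rowmul[OF i] by simp
    also have "\<dots> = (p i * M (\<pi> i) (inv \<pi> j)) * P (inv \<pi> j) j"
    proof (rule sum_single)
      show "inv \<pi> j \<in> {..<n}" using permutes_in_image[OF permutes_inv[OF pi]] j by simp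
      fix k assume "k \<in> {..<n}" "k \<noteq> inv \<pi> j"
      then have "P k j = 0" using zero[of k j] j permutes_inverses(2)[OF pi, of k] lessThan_iff by metis
      then show "p i * M (\<pi> i) k * P k j = 0" by simp
    qed simp
    also have "\<dots> = p i * E (\<pi> i) j"
    proof -
      define k0 where "k0 = inv \<pi> j"
      have k0: "k0 < n" "\<pi> k0 = j" using permutes_in_image[OF permutes_inv[OF pi]] j permutes_inverses[OF pi]
        by (auto simp: k0_def)
      have "M (\<pi> i) k0 = st_inv (p k0) * E (\<pi> i) j" using nA[OF pin[OF i] k0(1)] k0 by (simp add: M_def)
      moreover have "P k0 j = p k0" using k0 by (simp add: p_def)
      ultimately have "p i * M (\<pi> i) k0 * P k0 j = p i * E (\<pi> i) j * (st_inv (p k0) * p k0)"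
        by (simp add: ac_simps)
      then show ?thesis using st_inv_tng[OF tpp[OF k0(1)]] by (simp add: k0_def)
    qed
    finally have rhs: "mat_mult n (mat_mult n P M) P i j = p i * E (\<pi> i) j" .
    show "nu (nabla n (nabla n A) i j) = nu (mat_mult n (mat_mult n P (nabla n A)) P i j)"
      using lhs rhs c1[OF pin[OF i] j] by (simp add: M_def nu_mult)
  qed
  show ?thesis using p1 p2 p3 by blast
qed

theorem corollary3p4:
  fixes n :: nat and A P Q Abar Atil :: "'g::linordered_ab_group_add smat"
  assumes "nonsingular n A"
    and "invertible_smat n P" and "definite n Abar" and "mat_eq n A (mat_mult n P Abar)"
    and "invertible_smat n Q" and "definite n Atil" and "mat_eq n A (mat_mult n Atil Q)"
  shows "nu_equiv n (nabla n (nabla n Abar)) (nabla n Abar)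
       \<and> nu_equiv n (nabla n Abar) (mat_mult n (nabla n A) A)
       \<and> nu_equiv n (nabla n (nabla n Atil)) (nabla n Atil)
       \<and> nu_equiv n (nabla n Atil) (mat_mult n A (nabla n A))
       \<and> nu_equiv n (nabla n (nabla n A)) (mat_mult n (mat_mult n P (nabla n A)) P)"
proof -
  have L: "nu_equiv n (nabla n (nabla n Abar)) (nabla n Abar)
       \<and> nu_equiv n (nabla n Abar) (mat_mult n (nabla n A) A)
       \<and> nu_equiv n (nabla n (nabla n A)) (mat_mult n (mat_mult n P (nabla n A)) P)"
    by (rule left_part[OF assms(2,3,4)])
  have RA: "mat_eq n (tr A) (mat_mult n (tr Q) (tr Atil))"
    unfolding mat_mult_tr by (rule mat_eq_tr[OF assms(7)])
  have R: "nu_equiv n (nabla n (nabla n (tr Atil))) (nabla n (tr Atil))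
       \<and> nu_equiv n (nabla n (tr Atil)) (mat_mult n (nabla n (tr A)) (tr A))"
    using left_part[OF invertible_tr[OF assms(5)] definite_tr[OF assms(6)] RA] by blast
  have e1: "mat_eq n (nabla n (tr Atil)) (tr (nabla n Atil))"
    unfolding mat_eq_def using nabla_tr[of _ n _ Atil] by simp
  have e2: "nabla n (nabla n (tr Atil)) = nabla n (tr (nabla n Atil))" by (rule nabla_cong[OF e1])
  have R1: "nu_equiv n (nabla n (nabla n Atil)) (nabla n Atil)"
    unfolding nu_equiv_def
  proof (intro allI impI)
    fix i j assume i: "i<n" and j: "j<n"
    have "nu (nabla n (nabla n (tr Atil)) j i) = nu (nabla n (tr Atil) j i)"
      using R i j by (simp add: nu_equiv_def)
    then show "nu (nabla n (nabla n Atil) i j) = nu (nabla n Atil i j)"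
      unfolding e2 nabla_tr[OF j i] .
  qed
  have R2: "nu_equiv n (nabla n Atil) (mat_mult n A (nabla n A))"
    unfolding nu_equiv_def
  proof (intro allI impI)
    fix i j assume i: "i<n" and j: "j<n"
    have "nu (nabla n (tr Atil) j i) = nu (mat_mult n (nabla n (tr A)) (tr A) j i)"
      using R i j by (simp add: nu_equiv_def)
    moreover have "mat_mult n (nabla n (tr A)) (tr A) j i = mat_mult n A (nabla n A) i j"
      unfolding mat_mult_def by (rule sum.cong[OF refl]) (simp add: nabla_tr j mult.commute)
    ultimately show "nu (nabla n Atil i j) = nu (mat_mult n A (nabla n A) i j)"
      using nabla_tr[OF j i, of Atil] by simp
  qed
  show ?thesis using L R1 R2 by blast
qed


end
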